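(* Assume $a=a(\epsilon)\geq0$ is bounded and let $u_{\epsilon,a}$ be solutions of $\epsilon^2\Delta u+\mu u-|u|^2u+\epsilon af=0$ on $\mathbb{R}^2$ which are uniformly bounded. Then for every $\rho_1>\rho$, the maps $\frac{u_{\epsilon,a}}{\epsilon}$ and $\nabla u_{\epsilon,a}$ are uniformly bounded (for all sufficiently small $\epsilon$) on the set $\{x:|x|\geq\rho_1\}$.
   Context: $\mu\in C^\infty(\mathbb{R}^2,\mathbb{R})$ is radial, $\mu(x)=\mu_{\mathrm{rad}}(|x|)$, $\mu_{\mathrm{rad}}$ smooth with an even extension, $\mu\in L^\infty$, $\mu_{\mathrm{rad}}'<0$ on $(0,\infty)$, $\mu_{\mathrm{rad}}(\rho)=0$ for a unique $\rho>0$. $f\in C^\infty(\mathbb{R}^2,\mathbb{R}^2)$, $f(x)=f_{\mathrm{rad}}(|x|)\frac{x}{|x|}$, $f_{\mathrm{rad}}$ smooth with an odd extension, $f\in L^1\cap L^\infty$, $f_{\mathrm{rad}}>0$ on $(0,\infty)$. *)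

theory Defs
  imports "HOL-Analysis.Analysis"
begin

definition smooth_real :: "(real \<Rightarrow> real) \<Rightarrow> bool" where
  "smooth_real g \<longleftrightarrow> (\<forall>n x. ((deriv ^^ n) g) differentiable (at x))"

definition C2_plane :: "(real^2 \<Rightarrow> real^2) \<Rightarrow> bool" where
  "C2_plane u \<longleftrightarrow> (\<exists>Du D2u.
     (\<forall>x. (u has_derivative blinfun_apply (Du x)) (at x)) \<and>
     (\<forall>x. (Du has_derivative blinfun_apply (D2u x)) (at x)) \<and>
     continuous_on UNIV D2u)"

definition laplacian :: "(real^2 \<Rightarrow> real^2) \<Rightarrow> real^2 \<Rightarrow> real^2" where
  "laplacian u x = (\<Sum>i\<in>UNIV.
     vector_derivative (\<lambda>t. vector_derivative (\<lambda>s. u (x + s *\<^sub>R axis i 1)) (at t)) (at 0))"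

end

theory Submission
  imports Defs
begin

lemma line_d1:
  fixes u :: "real^2 \<Rightarrow> real^2"
  assumes "\<And>x. (u has_derivative blinfun_apply (Du x)) (at x)"
  shows "((\<lambda>t. u (p + t *\<^sub>R v)) has_vector_derivative blinfun_apply (Du (p + t *\<^sub>R v)) v) (at t)"
proof -
  have "((\<lambda>t. p + t *\<^sub>R v) has_derivative (\<lambda>h. h *\<^sub>R v)) (at t)"
    by (auto intro!: derivative_eq_intros)
  from has_derivative_compose[OF this assms]
  have "((\<lambda>t. u (p + t *\<^sub>R v)) has_derivative (\<lambda>h. blinfun_apply (Du (p + t *\<^sub>R v)) (h *\<^sub>R v))) (at t)"
    by (simp add: o_def)
  then show ?thesis unfolding has_vector_derivative_def
    by (simp add: blinfun.scaleR_right)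
qed

lemma line_d2:
  fixes Du :: "real^2 \<Rightarrow> ((real^2) \<Rightarrow>\<^sub>L (real^2))"
  assumes "\<And>x. (Du has_derivative blinfun_apply (D2u x)) (at x)"
  shows "((\<lambda>t. blinfun_apply (Du (p + t *\<^sub>R v)) v) has_vector_derivative
     blinfun_apply (blinfun_apply (D2u (p + t *\<^sub>R v)) v) v) (at t)"
proof -
  have "((\<lambda>t. p + t *\<^sub>R v) has_derivative (\<lambda>h. h *\<^sub>R v)) (at t)"
    by (auto intro!: derivative_eq_intros)
  from has_derivative_compose[OF this assms]
  have 1: "((\<lambda>t. Du (p + t *\<^sub>R v)) has_derivative (\<lambda>h. blinfun_apply (D2u (p + t *\<^sub>R v)) (h *\<^sub>R v))) (at t)"
    by (simp add: o_def)
  have 2: "((\<lambda>t. blinfun_apply (Du (p + t *\<^sub>R v)) v) has_derivative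
     (\<lambda>h. blinfun_apply (blinfun_apply (D2u (p + t *\<^sub>R v)) (h *\<^sub>R v)) v)) (at t)"
    using bounded_linear.has_derivative[OF bounded_bilinear.bounded_linear_left[OF bounded_bilinear_blinfun_apply] 1] .
  then show ?thesis unfolding has_vector_derivative_def
    by (simp add: blinfun.scaleR_right blinfun.scaleR_left)
qed

lemma comp_deriv:
  fixes g :: "real \<Rightarrow> real^2"
  assumes "(g has_vector_derivative D) (at t)"
  shows "((\<lambda>t. g t $ j) has_real_derivative D $ j) (at t)"
proof -
  have "bounded_linear (\<lambda>x::real^2. x $ j)" by (rule bounded_linear_vec_nth)
  from bounded_linear.has_vector_derivative[OF this assms]
  show ?thesis by (simp add: has_real_derivative_iff_has_vector_derivative)
qed

lemma lap_formula:
  assumes "\<And>x. (u has_derivative blinfun_apply (Du x)) (at x)"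
    "\<And>x. (Du has_derivative blinfun_apply (D2u x)) (at x)"
  shows "laplacian u x = (\<Sum>i\<in>UNIV. blinfun_apply (blinfun_apply (D2u x) (axis i 1)) (axis i 1))"
proof -
  have "\<And>i t. vector_derivative (\<lambda>s. u (x + s *\<^sub>R axis i 1)) (at t) = blinfun_apply (Du (x + t *\<^sub>R axis i 1)) (axis i 1)"
    using line_d1[OF assms(1)] by (rule vector_derivative_at)
  moreover have "\<And>i. vector_derivative (\<lambda>t. blinfun_apply (Du (x + t *\<^sub>R axis i 1)) (axis i 1)) (at 0)
     = blinfun_apply (blinfun_apply (D2u x) (axis i 1)) (axis i 1)"
    using line_d2[OF assms(2), of x _ 0] by (simp add: vector_derivative_at)
  ultimately show ?thesis unfolding laplacian_def by simp
qed

lemma max_2nd: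
  fixes g g' :: "real \<Rightarrow> real"
  assumes d1: "\<And>t. (g has_real_derivative g' t) (at t)"
    and d2: "(g' has_real_derivative D) (at 0)"
    and dp: "\<delta> > 0" and mx: "\<And>t. \<bar>t\<bar> < \<delta> \<Longrightarrow> g t \<le> g 0"
  shows "D \<le> 0"
proof (rule ccontr)
  assume "\<not> D \<le> 0" hence Dp: "D > 0" by simp
  have g0: "g' 0 = 0"
    by (rule DERIV_local_max[OF d1 dp]) (use mx in auto)
  obtain e where e: "e > 0" "\<And>h. h > 0 \<Longrightarrow> h < e \<Longrightarrow> g' 0 < g' (0 + h)"
    using DERIV_pos_inc_right[OF d2 Dp] by blast
  define h where "h = min e \<delta> / 2"
  have h: "h > 0" "h < e" "h < \<delta>" using e dp by (auto simp: h_def)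
  obtain z where z: "z > 0" "z < h" "g h - g 0 = (h - 0) * g' z"
    using MVT2[of 0 h g g'] h d1 by auto
  have "g' z > 0" using e(2)[of z] z h g0 by auto
  hence "h * g' z > 0" using h(1) by simp
  hence "g h > g 0" using z(3) by (simp add: algebra_simps)
  moreover have "g h \<le> g 0" using mx[of h] h by simp
  ultimately show False by simp
qed

lemma line_max:
  fixes z :: "real^2 \<Rightarrow> real"
  assumes "open U" "x \<in> U" "U \<subseteq> K" "\<forall>y\<in>K. z y \<le> z x"
    "\<And>t. ((\<lambda>t. z (x + t *\<^sub>R v)) has_real_derivative G t) (at t)"
    "(G has_real_derivative D) (at 0)" "norm v = 1"
  shows "D \<le> 0"
proof -
  obtain e where e: "e > 0" "ball x e \<subseteq> U" using assms(1,2) open_contains_ball by blast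
  show ?thesis
  proof (rule max_2nd[OF assms(5) assms(6) e(1)])
    fix t :: real assume "\<bar>t\<bar> < e"
    hence "x + t *\<^sub>R v \<in> ball x e" using assms(7) by (simp add: dist_norm)
    hence "x + t *\<^sub>R v \<in> K" using e assms(3) by blast
    thus "z (x + t *\<^sub>R v) \<le> z (x + 0 *\<^sub>R v)" using assms(4) by simp
  qed
qed

lemma maxprinc:
  fixes z :: "real^2 \<Rightarrow> real"
  assumes "compact K" "continuous_on K z" "\<forall>x\<in>K - U. z x \<le> 0"
    "\<And>x. x \<in> U \<Longrightarrow> z x > 0 \<Longrightarrow> (\<forall>y\<in>K. z y \<le> z x) \<Longrightarrow> False" "U \<subseteq> K"
  shows "\<forall>x\<in>K. z x \<le> 0"
proof (cases "K = {}")
  case True thus ?thesis by simp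
next
  case False
  obtain x where x: "x \<in> K" "\<forall>y\<in>K. z y \<le> z x"
    using continuous_attains_sup[OF assms(1) False assms(2)] by blast
  have "z x \<le> 0"
  proof (cases "x \<in> U")
    case True thus ?thesis using assms(4)[OF True _ x(2)] by force
  next
    case False thus ?thesis using assms(3) x(1) by blast
  qed
  thus ?thesis using x(2) by force
qed

lemma e_d1: "((\<lambda>t. exp (k * (c + t * a)) + exp (- (k * (c + t * a)))) has_real_derivative
   (a * k) * (exp (k * (c + t * a)) - exp (- (k * (c + t * a))))) (at t)"
  by (auto intro!: derivative_eq_intros simp: algebra_simps)

lemma e_d2: "((\<lambda>t. (a * k) * (exp (k * (c + t * a)) - exp (- (k * (c + t * a))))) has_real_derivative
   (a * k) * (a * k) * (exp (k * (c + t * a)) + exp (- (k * (c + t * a))))) (at t)"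
  by (auto intro!: derivative_eq_intros simp: algebra_simps)

definition ee :: "real \<Rightarrow> real \<Rightarrow> real" where "ee k s = exp (k * s) + exp (- (k * s))"
definition ee' :: "real \<Rightarrow> real \<Rightarrow> real" where "ee' k s = k * (exp (k * s) - exp (- (k * s)))"

lemma ee_line: "((\<lambda>t. ee k (c + t * a)) has_real_derivative a * ee' k (c + t * a)) (at t)"
  using e_d1[of k c a t] unfolding ee_def ee'_def by (simp add: algebra_simps)

lemma ee'_line: "((\<lambda>t. a * ee' k (c + t * a)) has_real_derivative (a*a*(k*k)) * ee k (c + t * a)) (at t)"
  using e_d2[of a k c t] unfolding ee_def ee'_def by (simp add: algebra_simps)

lemma ee_pos: "ee k s > 0" unfolding ee_def by (simp add: add_pos_pos)

lemma ee_ge: "\<bar>s\<bar> = r \<Longrightarrow> ee k s \<ge> exp (k * r)"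
  unfolding ee_def by (cases "s \<ge> 0") auto

lemma B_line:
  fixes xc :: "real^2"
  shows "((\<lambda>t. (ee k ((x + t *\<^sub>R v)$1 - xc$1) + ee k ((x + t *\<^sub>R v)$2 - xc$2)) / X) has_real_derivative
     (v$1 * ee' k ((x$1 - xc$1) + t * v$1) + v$2 * ee' k ((x$2 - xc$2) + t * v$2)) / X) (at t)"
proof -
  have eq: "(\<lambda>t. (ee k ((x + t *\<^sub>R v)$1 - xc$1) + ee k ((x + t *\<^sub>R v)$2 - xc$2)) / X)
     = (\<lambda>t. (ee k ((x$1 - xc$1) + t * v$1) + ee k ((x$2 - xc$2) + t * v$2)) / X)"
    by (simp add: algebra_simps)
  show ?thesis unfolding eq
    by (intro DERIV_cdivide DERIV_add ee_line)
qed

lemma B'_line: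
  fixes xc :: "real^2"
  shows "((\<lambda>t. (v$1 * ee' k ((x$1 - xc$1) + t * v$1) + v$2 * ee' k ((x$2 - xc$2) + t * v$2)) / X) has_real_derivative
     (v$1 * v$1 * (k*k) * ee k ((x$1 - xc$1) + t * v$1) + v$2 * v$2 * (k*k) * ee k ((x$2 - xc$2) + t * v$2)) / X) (at t)"
  by (intro DERIV_cdivide DERIV_add ee'_line)

lemma small_est:
  fixes w :: "real^2 \<Rightarrow> real" and Wa Wb :: "real^2 \<Rightarrow> real^2 \<Rightarrow> real" and xc :: "real^2"
  assumes d1: "\<And>p v t. ((\<lambda>t. w (p + t *\<^sub>R v)) has_real_derivative Wa (p + t *\<^sub>R v) v) (at t)"
    and d2: "\<And>p v t. ((\<lambda>t. Wa (p + t *\<^sub>R v) v) has_real_derivative Wb (p + t *\<^sub>R v) v) (at t)"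
    and cont: "continuous_on UNIV w"
    and ep: "\<epsilon> > 0" and mp: "m > 0" and rp: "r > 0" and Ep: "E \<ge> 0" and Mp: "M \<ge> 0"
    and hb: "\<And>y. (\<forall>k. \<bar>y$k - xc$k\<bar> \<le> r) \<Longrightarrow> \<bar>w y\<bar> \<le> M \<and>
        (\<exists>c\<ge>m. \<epsilon>\<^sup>2 * (Wb y (axis 1 1) + Wb y (axis 2 1)) \<ge> c * w y - E)"
  shows "w xc \<le> E / m + 4 * M / exp (sqrt m / \<epsilon> * r)"
proof -
  define \<kappa> where "\<kappa> = sqrt m / \<epsilon>"
  define X where "X = exp (\<kappa> * r)"
  have Xp: "X > 0" by (simp add: X_def)
  have kk: "\<epsilon>\<^sup>2 * (\<kappa> * \<kappa>) = m" using ep mp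
    by (simp add: \<kappa>_def power2_eq_square field_simps)
  define B where "B y = (ee \<kappa> (y$1 - xc$1) + ee \<kappa> (y$2 - xc$2)) / X" for y :: "real^2"
  define z where "z y = w y - E / m - M * B y" for y
  define K where "K = cbox (xc - (\<chi> k. r)) (xc + (\<chi> k. r))"
  define U where "U = box (xc - (\<chi> k. r)) (xc + (\<chi> k. r))"
  have K_iff: "y \<in> K \<longleftrightarrow> (\<forall>k. \<bar>y$k - xc$k\<bar> \<le> r)" for y
    unfolding K_def mem_box_cart by (auto simp: abs_le_iff algebra_simps)
  have U_iff: "y \<in> U \<longleftrightarrow> (\<forall>k. \<bar>y$k - xc$k\<bar> < r)" for y
    unfolding U_def mem_box_cart by (auto simp: abs_less_iff algebra_simps)
  have UK: "U \<subseteq> K" unfolding subset_iff K_iff U_iff by (meson less_imp_le)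
  have Bpos: "B y > 0" for y unfolding B_def using ee_pos Xp by (simp add: add_pos_pos)
  have "\<forall>x\<in>K. z x \<le> 0"
  proof (rule maxprinc[where U = U])
    show "compact K" unfolding K_def by simp
    show "continuous_on K z" unfolding z_def B_def ee_def
      by (intro continuous_intros continuous_on_subset[OF cont]) (auto simp: Xp[THEN less_imp_neq, symmetric])
    show "U \<subseteq> K" by (rule UK)
    show "\<forall>x\<in>K - U. z x \<le> 0"
    proof
      fix x assume x: "x \<in> K - U"
      then obtain k where k: "\<bar>x$k - xc$k\<bar> = r" using K_iff U_iff
        by (metis Diff_iff order_le_less)
      have "B x \<ge> 1"
      proof -
        have "ee \<kappa> (x$k - xc$k) \<ge> X" using ee_ge[OF k] by (simp add: X_def)
        moreover have "k = 1 \<or> k = 2" by (rule exhaust_2)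
        ultimately have "ee \<kappa> (x$1 - xc$1) + ee \<kappa> (x$2 - xc$2) \<ge> X"
          using ee_pos[of \<kappa> "x$1 - xc$1"] ee_pos[of \<kappa> "x$2 - xc$2"] by auto
        thus ?thesis unfolding B_def using Xp by simp
      qed
      moreover have "\<bar>w x\<bar> \<le> M" using hb x K_iff by blast
      ultimately have "M * B x \<ge> w x" using mult_left_mono[OF \<open>B x \<ge> 1\<close> Mp] by linarith
      moreover have "E / m \<ge> 0" using Ep mp by simp
      ultimately show "z x \<le> 0" unfolding z_def by simp
    qed
    fix x assume xU: "x \<in> U" and zp: "z x > 0" and mx: "\<forall>y\<in>K. z y \<le> z x"
    have openU: "open U" unfolding U_def by (rule open_box)
    have Dm: "Wb x (axis j 1) - M * (((axis j 1::real^2)$1 * (axis j 1::real^2)$1 * (\<kappa>*\<kappa>) * ee \<kappa> (x$1 - xc$1)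
           + (axis j 1::real^2)$2 * (axis j 1::real^2)$2 * (\<kappa>*\<kappa>) * ee \<kappa> (x$2 - xc$2)) / X) \<le> 0" for j
    proof (rule line_max[OF openU xU UK mx])
      let ?v = "axis j 1 :: real^2"
      show "norm ?v = 1" by simp
      show "((\<lambda>t. z (x + t *\<^sub>R ?v)) has_real_derivative
          Wa (x + t *\<^sub>R ?v) ?v - M * ((?v$1 * ee' \<kappa> ((x$1 - xc$1) + t * ?v$1) + ?v$2 * ee' \<kappa> ((x$2 - xc$2) + t * ?v$2)) / X)) (at t)" for t
        unfolding z_def B_def
        using DERIV_diff[OF DERIV_diff[OF d1[of x ?v t] DERIV_const[of "E/m"]] DERIV_cmult[OF B_line[of \<kappa> x ?v xc X t], of M]] by simp
      show "((\<lambda>t. Wa (x + t *\<^sub>R ?v) ?v - M * ((?v$1 * ee' \<kappa> ((x$1 - xc$1) + t * ?v$1) + ?v$2 * ee' \<kappa> ((x$2 - xc$2) + t * ?v$2)) / X))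
         has_real_derivative Wb x ?v - M * ((?v$1 * ?v$1 * (\<kappa>*\<kappa>) * ee \<kappa> (x$1 - xc$1) + ?v$2 * ?v$2 * (\<kappa>*\<kappa>) * ee \<kappa> (x$2 - xc$2)) / X)) (at 0)"
        using DERIV_diff[OF d2[of x ?v 0] DERIV_cmult[OF B'_line[of ?v \<kappa> x xc X 0], of M]] by simp
    qed
    have sum: "Wb x (axis 1 1) + Wb x (axis 2 1) - M * (\<kappa>*\<kappa>) * B x \<le> 0"
    proof -
      have a: "Wb x (axis 1 1) \<le> M * (\<kappa>*\<kappa>) * ee \<kappa> (x$1 - xc$1) / X" using Dm[of 1] by (simp add: axis_def algebra_simps)
      have b: "Wb x (axis 2 1) \<le> M * (\<kappa>*\<kappa>) * ee \<kappa> (x$2 - xc$2) / X" using Dm[of 2] by (simp add: axis_def algebra_simps)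
      have c: "M * (\<kappa>*\<kappa>) * B x = M * (\<kappa>*\<kappa>) * ee \<kappa> (x$1 - xc$1) / X + M * (\<kappa>*\<kappa>) * ee \<kappa> (x$2 - xc$2) / X"
        unfolding B_def by (simp add: add_divide_distrib algebra_simps)
      show ?thesis using a b c by linarith
    qed
    hence s2: "\<epsilon>\<^sup>2 * (Wb x (axis 1 1) + Wb x (axis 2 1)) \<le> m * M * B x"
    proof -
      have "\<epsilon>\<^sup>2 * (Wb x (axis 1 1) + Wb x (axis 2 1)) \<le> \<epsilon>\<^sup>2 * (M * (\<kappa>*\<kappa>) * B x)"
        using sum ep by (intro mult_left_mono) auto
      also have "\<dots> = m * M * B x" using kk by (simp add: algebra_simps)
      finally show ?thesis .
    qed
    obtain c where c: "c \<ge> m" "\<epsilon>\<^sup>2 * (Wb x (axis 1 1) + Wb x (axis 2 1)) \<ge> c * w x - E"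
      using hb[of x] xU U_iff by (meson less_imp_le)
    have wx: "w x > E / m + M * B x" using zp unfolding z_def by simp
    have "E / m \<ge> 0" "M * B x \<ge> 0" using Ep mp Mp Bpos[of x] by auto
    hence wpos: "w x \<ge> 0" using wx by linarith
    have "m * w x > m * (E / m + M * B x)" using mult_strict_left_mono[OF wx mp] .
    hence "m * w x > E + m * M * B x" using mp by (simp add: distrib_left)
    moreover have "c * w x \<ge> m * w x" using c(1) wpos by (simp add: mult_right_mono)
    ultimately show False using c(2) s2 by linarith
  qed
  hence "z xc \<le> 0" using K_iff rp by simp
  moreover have "B xc = 4 / X" unfolding B_def ee_def by simp
  ultimately show ?thesis unfolding z_def X_def \<kappa>_def by (simp add: mult.commute)
qed

lemma psi_d1:
  "((\<lambda>t. c * ((qq + t*b)\<^sup>2 + (ss + t*a) * (2*d - (ss + t*a))) + BB * (ss + t*a) * (d - (ss + t*a)))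
    has_real_derivative
     c * (2*(qq + t*b)*b + a*(2*d - 2*(ss + t*a))) + BB * a * (d - 2*(ss + t*a))) (at t)"
  by (auto intro!: derivative_eq_intros simp: algebra_simps power2_eq_square)

lemma psi_d2:
  "((\<lambda>t. c * (2*(qq + t*b)*b + a*(2*d - 2*(ss + t*a))) + BB * a * (d - 2*(ss + t*a)))
    has_real_derivative c * (2*b*b - 2*a*a) - 2 * BB * a * a) (at t)"
  by (auto intro!: derivative_eq_intros simp: algebra_simps)

lemma grad_est:
  fixes w :: "real^2 \<Rightarrow> real" and Wa Wb :: "real^2 \<Rightarrow> real^2 \<Rightarrow> real" and xc :: "real^2"
    and i l :: 2
  assumes d1: "\<And>p v t. ((\<lambda>t. w (p + t *\<^sub>R v)) has_real_derivative Wa (p + t *\<^sub>R v) v) (at t)"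
    and d2: "\<And>p v t. ((\<lambda>t. Wa (p + t *\<^sub>R v) v) has_real_derivative Wb (p + t *\<^sub>R v) v) (at t)"
    and cont: "continuous_on UNIV w"
    and W1neg: "\<And>p v. Wa p (- v) = - Wa p v" and W2neg: "\<And>p v. Wb p (- v) = Wb p v"
    and il: "i \<noteq> l" and dp: "d > 0" and B1p: "Bd > 0" and A1p: "Ad \<ge> 0"
    and hb: "\<And>y. (\<forall>k. \<bar>y$k - xc$k\<bar> \<le> d) \<Longrightarrow> \<bar>w y\<bar> \<le> Ad \<and>
        \<bar>Wb y (axis i 1) + Wb y (axis l 1)\<bar> \<le> Bd"
  shows "Wa xc (axis i 1) \<le> 2 * Ad / d + Bd * d"
proof -
  have kil: "k = i \<or> k = l" for k :: 2 by (metis exhaust_2 il)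
  define c where "c = Ad / d\<^sup>2"
  have cp: "c \<ge> 0" using A1p by (simp add: c_def)
  define R where "R y = y + (2 * (xc$i - y$i)) *\<^sub>R (axis i 1 :: real^2)" for y :: "real^2"
  have Ri: "(R y)$i = 2 * xc$i - y$i" for y by (simp add: R_def)
  have Rl: "(R y)$l = y$l" for y using il by (simp add: R_def axis_def)
  define Rv where "Rv v = v - (2 * v$i) *\<^sub>R (axis i 1 :: real^2)" for v :: "real^2"
  have Rline: "R (x + t *\<^sub>R v) = R x + t *\<^sub>R Rv v" for x v t
    by (simp add: R_def Rv_def vec_eq_iff algebra_simps)
  define \<phi> where "\<phi> y = (w y - w (R y)) / 2" for y
  define \<Psi> where "\<Psi> s q = c * (q\<^sup>2 + s * (2*d - s)) + Bd * s * (d - s)" for s q :: real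
  define \<psi> where "\<psi> y = \<Psi> (y$i - xc$i) (y$l - xc$l)" for y :: "real^2"
  define z where "z y = \<phi> y - \<psi> y" for y
  define a :: "real^2" where "a = (\<chi> k. if k = i then xc$i else xc$k - d)"
  define b :: "real^2" where "b = xc + (\<chi> k. d)"
  define K where "K = cbox a b"
  define U where "U = box a b"
  have K_iff: "y \<in> K \<longleftrightarrow> xc$i \<le> y$i \<and> y$i \<le> xc$i + d \<and> \<bar>y$l - xc$l\<bar> \<le> d" for y
    unfolding K_def mem_box_cart a_def b_def using il kil
    by (auto simp: abs_le_iff algebra_simps)
  have U_iff: "y \<in> U \<longleftrightarrow> xc$i < y$i \<and> y$i < xc$i + d \<and> \<bar>y$l - xc$l\<bar> < d" for y
    unfolding U_def mem_box_cart a_def b_def using il kil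
    by (auto simp: abs_less_iff algebra_simps)
  have UK: "U \<subseteq> K" unfolding subset_iff K_iff U_iff by auto
  have inbox: "\<forall>k. \<bar>y$k - xc$k\<bar> \<le> d" "\<forall>k. \<bar>R y$k - xc$k\<bar> \<le> d" if "y \<in> K" for y
  proof -
    have yi: "xc$i \<le> y$i" "y$i \<le> xc$i + d" "\<bar>y$l - xc$l\<bar> \<le> d" using that K_iff by auto
    show "\<forall>k. \<bar>y$k - xc$k\<bar> \<le> d"
    proof
      fix k show "\<bar>y$k - xc$k\<bar> \<le> d" using kil[of k] yi by (auto simp: abs_le_iff)
    qed
    show "\<forall>k. \<bar>R y$k - xc$k\<bar> \<le> d"
    proof
      fix k show "\<bar>R y$k - xc$k\<bar> \<le> d" using kil[of k] yi Ri[of y] Rl[of y] by (auto simp: abs_le_iff)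
    qed
  qed
  have "\<forall>y\<in>K. z y \<le> 0"
  proof (rule maxprinc[where U = U])
    show "compact K" unfolding K_def by simp
    have "continuous_on UNIV R" unfolding R_def by (intro continuous_intros)
    hence "continuous_on K R" by (rule continuous_on_subset) simp
    then have c2: "continuous_on K (\<lambda>y. w (R y))" by (rule continuous_on_compose2[OF cont]) simp
    have c1: "continuous_on K w" by (rule continuous_on_subset[OF cont]) simp
    have cn: "continuous_on K (\<lambda>y::real^2. y$k)" for k
      by (rule linear_continuous_on[OF bounded_linear_vec_nth])
    have c3: "continuous_on K \<psi>" unfolding \<psi>_def \<Psi>_def
      by (intro continuous_on_add continuous_on_mult continuous_on_diff continuous_on_const
          continuous_on_power cn)
    have "continuous_on K (\<lambda>y. (w y - w (R y)) / 2 - \<psi> y)"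
      by (intro continuous_on_diff continuous_on_divide continuous_on_const c1 c2 c3) simp
    then show "continuous_on K z" unfolding z_def \<phi>_def .
    show "U \<subseteq> K" by (rule UK)
    show "\<forall>y\<in>K - U. z y \<le> 0"
    proof
      fix y assume y: "y \<in> K - U"
      define s where "s = y$i - xc$i"
      define q where "q = y$l - xc$l"
      have s: "0 \<le> s" "s \<le> d" and q: "\<bar>q\<bar> \<le> d" using y K_iff s_def q_def by auto
      have sq: "s = 0 \<or> s = d \<or> \<bar>q\<bar> = d" using y K_iff U_iff s_def q_def by force
      have psi_nn: "\<psi> y \<ge> 0" unfolding \<psi>_def \<Psi>_def using s cp B1p
        by (simp add: s_def[symmetric] q_def[symmetric] mult_nonneg_nonneg add_nonneg_nonneg)
      show "z y \<le> 0"
      proof (cases "s = 0")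
        case True
        hence "R y = y" unfolding R_def s_def by simp
        thus ?thesis using psi_nn by (simp add: z_def \<phi>_def)
      next
        case False
        hence sq2: "s = d \<or> \<bar>q\<bar> = d" using sq by simp
        have "\<bar>w y\<bar> \<le> Ad" "\<bar>w (R y)\<bar> \<le> Ad" using hb[OF inbox(1)] hb[OF inbox(2)] y by auto
        hence "\<phi> y \<le> Ad" unfolding \<phi>_def by (simp add: abs_le_iff)
        moreover have "\<psi> y \<ge> Ad"
        proof -
          have "q\<^sup>2 + s * (2*d - s) \<ge> d\<^sup>2"
          proof (cases "s = d")
            case True thus ?thesis by (simp add: power2_eq_square algebra_simps)
          next
            case False
            hence "\<bar>q\<bar> = d" using sq2 by simp
            hence "q\<^sup>2 = d\<^sup>2" by (metis power2_abs)
            moreover have "s * (2*d - s) \<ge> 0" using s by simp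
            ultimately show ?thesis by simp
          qed
          hence "c * (q\<^sup>2 + s * (2*d - s)) \<ge> c * d\<^sup>2" using cp by (rule mult_left_mono)
          moreover have "c * d\<^sup>2 = Ad" using dp by (simp add: c_def)
          moreover have "Bd * s * (d - s) \<ge> 0" using s B1p by simp
          ultimately show ?thesis unfolding \<psi>_def \<Psi>_def s_def[symmetric] q_def[symmetric] by linarith
        qed
        ultimately show ?thesis by (simp add: z_def)
      qed
    qed
    fix x assume xU: "x \<in> U" and zp: "z x > 0" and mx: "\<forall>y\<in>K. z y \<le> z x"
    have openU: "open U" unfolding U_def by (rule open_box)
    have Dm: "(Wb x (axis m 1) - Wb (R x) (axis m 1)) / 2 -
       (c * (2 * ((axis m 1::real^2)$l) * ((axis m 1::real^2)$l) - 2 * ((axis m 1::real^2)$i) * ((axis m 1::real^2)$i))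
          - 2 * Bd * ((axis m 1::real^2)$i) * ((axis m 1::real^2)$i)) \<le> 0" for m
    proof -
      let ?v = "axis m 1 :: real^2"
      have W2R: "Wb (R x) (Rv ?v) = Wb (R x) ?v"
      proof (cases "m = i")
        case True
        hence "Rv ?v = - ?v" by (simp add: Rv_def vec_eq_iff axis_def)
        thus ?thesis by (simp add: W2neg)
      next
        case False
        hence "Rv ?v = ?v" by (simp add: Rv_def vec_eq_iff axis_def)
        thus ?thesis by simp
      qed
      have psil: "\<psi> (x + t *\<^sub>R ?v) = \<Psi> ((x$i - xc$i) + t * ?v$i) ((x$l - xc$l) + t * ?v$l)" for t
        unfolding \<psi>_def by (simp add: algebra_simps)
      show ?thesis
      proof (rule line_max[OF openU xU UK mx])
        show "norm ?v = 1" by simp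
        show "((\<lambda>t. z (x + t *\<^sub>R ?v)) has_real_derivative
            (Wa (x + t *\<^sub>R ?v) ?v - Wa (R x + t *\<^sub>R Rv ?v) (Rv ?v)) / 2
             - (c * (2*((x$l - xc$l) + t * ?v$l)*?v$l + ?v$i*(2*d - 2*((x$i - xc$i) + t * ?v$i))) + Bd * ?v$i * (d - 2*((x$i - xc$i) + t * ?v$i)))) (at t)" for t
          unfolding z_def \<phi>_def psil Rline \<Psi>_def
          by (intro DERIV_diff DERIV_cdivide d1 psi_d1)
        show "((\<lambda>t. (Wa (x + t *\<^sub>R ?v) ?v - Wa (R x + t *\<^sub>R Rv ?v) (Rv ?v)) / 2
             - (c * (2*((x$l - xc$l) + t * ?v$l)*?v$l + ?v$i*(2*d - 2*((x$i - xc$i) + t * ?v$i))) + Bd * ?v$i * (d - 2*((x$i - xc$i) + t * ?v$i))))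
           has_real_derivative (Wb x ?v - Wb (R x) ?v) / 2 -
       (c * (2 * (?v$l) * (?v$l) - 2 * (?v$i) * (?v$i)) - 2 * Bd * (?v$i) * (?v$i))) (at 0)"
          using DERIV_diff[OF DERIV_cdivide[OF DERIV_diff[OF d2[of x ?v 0] d2[of "R x" "Rv ?v" 0]], of 2]
                psi_d2[where c=c and qq="x$l - xc$l" and b="?v$l" and a="?v$i" and ss="x$i - xc$i" and d=d and BB=Bd and t=0]] W2R by simp
      qed
    qed
    have "x \<in> K" using xU UK by blast
    have L1: "\<bar>Wb x (axis i 1) + Wb x (axis l 1)\<bar> \<le> Bd" using hb[OF inbox(1)[OF \<open>x \<in> K\<close>]] by simp
    have L2: "\<bar>Wb (R x) (axis i 1) + Wb (R x) (axis l 1)\<bar> \<le> Bd" using hb[OF inbox(2)[OF \<open>x \<in> K\<close>]] by simp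
    have Di0: "Wb x (axis i 1) - Wb (R x) (axis i 1) \<le> - (4 * c) - 4 * Bd"
      using Dm[of i] il by (simp add: axis_def)
    hence Di: "(Wb x (axis i 1) - Wb (R x) (axis i 1)) / 2 + 2 * c + 2 * Bd \<le> 0" by (simp add: field_simps)
    have Dl0: "Wb x (axis l 1) - Wb (R x) (axis l 1) \<le> 4 * c"
      using Dm[of l] il by (simp add: axis_def)
    hence Dl: "(Wb x (axis l 1) - Wb (R x) (axis l 1)) / 2 - 2 * c \<le> 0" by (simp add: field_simps)
    show False using Di0 Dl0 L1 L2 B1p by (simp add: abs_le_iff)
  qed
  define h where "h t = w (xc + t *\<^sub>R axis i 1) - w (xc + t *\<^sub>R (- axis i 1))" for t
  have hd: "(h has_real_derivative 2 * Wa xc (axis i 1)) (at 0)"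
    using DERIV_diff[OF d1[of xc "axis i 1" 0] d1[of xc "- axis i 1" 0]] W1neg
    unfolding h_def by simp
  have lim: "((\<lambda>t. (h t - h 0) / (t - 0)) \<longlongrightarrow> 2 * Wa xc (axis i 1)) (at_right 0)"
    using has_field_derivative_at_within[OF hd, of "{0<..}"]
    unfolding has_field_derivative_iff by simp
  have ev: "\<forall>\<^sub>F t in at_right 0. (h t - h 0) / (t - 0) \<le> 2 * (2 * Ad / d + Bd * d)"
    unfolding eventually_at_right_field
  proof (intro exI[of _ d] conjI allI impI)
    show "0 < d" by (rule dp)
    fix t :: real assume t0: "0 < t" and t1: "t < d"
    have t: "0 < t \<and> t < d" using t0 t1 by simp
    let ?y = "xc + t *\<^sub>R axis i 1"
    have yK: "?y \<in> K" unfolding K_iff using t il by (simp add: axis_def)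
    have Ry: "R ?y = xc + t *\<^sub>R (- axis i 1)" unfolding R_def by (simp add: vec_eq_iff axis_def)
    have "z ?y \<le> 0" using \<open>\<forall>y\<in>K. z y \<le> 0\<close> yK by blast
    hence "h t / 2 \<le> \<psi> ?y" unfolding z_def \<phi>_def h_def Ry by simp
    moreover have "\<psi> ?y = c * (t * (2*d - t)) + Bd * t * (d - t)"
      unfolding \<psi>_def \<Psi>_def using il by (simp add: axis_def)
    moreover have "c * (t * (2*d - t)) + Bd * t * (d - t) \<le> t * (2 * Ad / d + Bd * d)"
    proof -
      have "c * (t * (2*d - t)) \<le> c * (t * (2 * d))" using cp t by (intro mult_left_mono) auto
      moreover have "c * (t * (2 * d)) = t * (2 * Ad / d)" using dp by (simp add: c_def power2_eq_square field_simps)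
      moreover have "Bd * t * (d - t) \<le> Bd * t * d" using B1p t by (intro mult_left_mono) auto
      ultimately show ?thesis by (simp add: algebra_simps)
    qed
    ultimately have "h t \<le> 2 * t * (2 * Ad / d + Bd * d)" by linarith
    moreover have "h 0 = 0" by (simp add: h_def)
    ultimately show "(h t - h 0) / (t - 0) \<le> 2 * (2 * Ad / d + Bd * d)" using t
      by (simp add: divide_le_eq algebra_simps)
  qed
  have "2 * Wa xc (axis i 1) \<le> 2 * (2 * Ad / d + Bd * d)"
    by (rule tendsto_upperbound[OF lim ev]) simp
  thus ?thesis by simp
qed

lemma scal_facts:
  fixes u :: "real^2 \<Rightarrow> real^2"
  assumes du: "\<And>x. (u has_derivative blinfun_apply (Du x)) (at x)"
    and d2u: "\<And>x. (Du has_derivative blinfun_apply (D2u x)) (at x)"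
  shows "((\<lambda>t. s * u (p + t *\<^sub>R v) $ j) has_real_derivative s * (blinfun_apply (Du (p + t *\<^sub>R v)) v $ j)) (at t)"
    and "((\<lambda>t. s * (blinfun_apply (Du (p + t *\<^sub>R v)) v $ j)) has_real_derivative
          s * (blinfun_apply (blinfun_apply (D2u (p + t *\<^sub>R v)) v) v $ j)) (at t)"
    and "continuous_on UNIV (\<lambda>y. s * u y $ j)"
    and "s * (blinfun_apply (Du p) (- v) $ j) = - (s * (blinfun_apply (Du p) v $ j))"
    and "s * (blinfun_apply (blinfun_apply (D2u p) (- v)) (- v) $ j) = s * (blinfun_apply (blinfun_apply (D2u p) v) v $ j)"
proof -
  show "((\<lambda>t. s * u (p + t *\<^sub>R v) $ j) has_real_derivative s * (blinfun_apply (Du (p + t *\<^sub>R v)) v $ j)) (at t)"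
    by (intro DERIV_cmult comp_deriv line_d1 du)
  show "((\<lambda>t. s * (blinfun_apply (Du (p + t *\<^sub>R v)) v $ j)) has_real_derivative
          s * (blinfun_apply (blinfun_apply (D2u (p + t *\<^sub>R v)) v) v $ j)) (at t)"
    by (intro DERIV_cmult comp_deriv[of "\<lambda>t. blinfun_apply (Du (p + t *\<^sub>R v)) v"] line_d2 d2u)
  have "continuous_on UNIV u"
    using has_derivative_continuous[OF du] by (simp add: continuous_at_imp_continuous_on)
  then show "continuous_on UNIV (\<lambda>y. s * u y $ j)"
    by (intro continuous_intros continuous_on_compose2[OF linear_continuous_on[OF bounded_linear_vec_nth]]) auto
  show "s * (blinfun_apply (Du p) (- v) $ j) = - (s * (blinfun_apply (Du p) v $ j))"
    by (simp add: blinfun.minus_right)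
  show "s * (blinfun_apply (blinfun_apply (D2u p) (- v)) (- v) $ j) = s * (blinfun_apply (blinfun_apply (D2u p) v) v $ j)"
    by (simp add: blinfun.minus_right blinfun.minus_left)
qed

lemma mu_mono:
  assumes "smooth_real g" "\<And>r. r > 0 \<Longrightarrow> deriv g r < 0" "0 \<le> r1" "r1 < r2"
  shows "g r2 < g r1"
proof -
  have "g differentiable at x" for x using assms(1) unfolding smooth_real_def
    by (metis funpow_0)
  hence d: "(g has_real_derivative deriv g x) (at x)" for x
    using DERIV_deriv_iff_real_differentiable by blast
  obtain z where z: "z > r1" "z < r2" "g r2 - g r1 = (r2 - r1) * deriv g z"
    using MVT2[OF assms(4) d] by blast
  have "deriv g z < 0" using assms(2,3) z by simp
  hence "(r2 - r1) * deriv g z < 0" using assms(4) by (simp add: mult_pos_neg)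
  thus ?thesis using z by simp
qed

lemma box_norm:
  fixes x y :: "real^2"
  assumes "\<forall>k. \<bar>y$k - x$k\<bar> \<le> r"
  shows "norm y \<ge> norm x - 2 * r"
proof -
  have "norm (y - x) \<le> (\<Sum>k\<in>UNIV. \<bar>(y - x)$k\<bar>)" by (rule norm_le_l1_cart)
  also have "\<dots> \<le> 2 * r" using assms[rule_format, of 1] assms[rule_format, of 2] by (simp add: sum_2)
  finally show ?thesis using norm_triangle_ineq2[of x y] by (simp add: norm_minus_commute)
qed

lemma onorm_bd:
  fixes L :: "(real^2) \<Rightarrow>\<^sub>L (real^2)"
  assumes "\<And>i j. \<bar>blinfun_apply L (axis i 1) $ j\<bar> \<le> K"
  shows "onorm (blinfun_apply L) \<le> 4 * K"
proof -
  have nb: "norm (blinfun_apply L b) \<le> 2 * K" if bB: "b \<in> Basis" for b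
  proof -
    obtain i where b: "b = axis i 1" using axis_inverse[OF bB] by blast
    have "norm (blinfun_apply L b) \<le> (\<Sum>j\<in>UNIV. \<bar>blinfun_apply L b $ j\<bar>)" by (rule norm_le_l1_cart)
    also have "\<dots> \<le> 2 * K" using assms[of i 1] assms[of i 2] b by (simp add: sum_2)
    finally show ?thesis .
  qed
  have "(\<Sum>b\<in>Basis. norm (blinfun_apply L b)) \<le> of_nat (card (Basis :: (real^2) set)) * (2 * K)"
    by (rule sum_bounded_above) (rule nb)
  also have "card (Basis :: (real^2) set) = 2" using DIM_cart[where 'a=real and 'b=2] by simp
  finally show ?thesis
    by (intro onorm_componentwise_le blinfun.bounded_linear_right) simp
qed

theorem mainTheorem7:
  fixes \<mu> :: "real^2 \<Rightarrow> real" and \<mu>rad :: "real \<Rightarrow> real"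
    and f :: "real^2 \<Rightarrow> real^2" and frad :: "real \<Rightarrow> real"
    and \<rho> \<epsilon>0 :: real and a :: "real \<Rightarrow> real" and u :: "real \<Rightarrow> real^2 \<Rightarrow> real^2"
  assumes mu_def: "\<And>x. \<mu> x = \<mu>rad (norm x)"
    and mu_smooth: "smooth_real \<mu>rad"
    and mu_even: "\<And>r. \<mu>rad (- r) = \<mu>rad r"
    and mu_bounded: "bounded (range \<mu>)"
    and mu_decr: "\<And>r. r > 0 \<Longrightarrow> deriv \<mu>rad r < 0"
    and rho_pos: "\<rho> > 0" and rho_zero: "\<mu>rad \<rho> = 0"
    and rho_unique: "\<And>r. r > 0 \<Longrightarrow> \<mu>rad r = 0 \<Longrightarrow> r = \<rho>"
    and f_def: "\<And>x. f x = frad (norm x) *\<^sub>R (x /\<^sub>R norm x)"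
    and f_smooth: "smooth_real frad"
    and f_odd: "\<And>r. frad (- r) = - frad r"
    and f_L1: "integrable lborel f"
    and f_Linf: "bounded (range f)"
    and f_pos: "\<And>r. r > 0 \<Longrightarrow> frad r > 0"
    and eps0_pos: "\<epsilon>0 > 0"
    and a_nonneg: "\<And>\<epsilon>. \<epsilon> \<in> {0<..<\<epsilon>0} \<Longrightarrow> a \<epsilon> \<ge> 0"
    and a_bounded: "\<exists>A. \<forall>\<epsilon>\<in>{0<..<\<epsilon>0}. a \<epsilon> \<le> A"
    and u_C2: "\<And>\<epsilon>. \<epsilon> \<in> {0<..<\<epsilon>0} \<Longrightarrow> C2_plane (u \<epsilon>)"
    and u_eq: "\<And>\<epsilon> x. \<epsilon> \<in> {0<..<\<epsilon>0} \<Longrightarrow>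
       \<epsilon>\<^sup>2 *\<^sub>R laplacian (u \<epsilon>) x + \<mu> x *\<^sub>R u \<epsilon> x - (norm (u \<epsilon> x))\<^sup>2 *\<^sub>R u \<epsilon> x
         + (\<epsilon> * a \<epsilon>) *\<^sub>R f x = 0"
    and u_bounded: "\<exists>M. \<forall>\<epsilon>\<in>{0<..<\<epsilon>0}. \<forall>x. norm (u \<epsilon> x) \<le> M"
  shows "\<forall>\<rho>1 > \<rho>. \<exists>\<epsilon>1 > 0. \<epsilon>1 \<le> \<epsilon>0 \<and> (\<exists>C. \<forall>\<epsilon>\<in>{0<..<\<epsilon>1}. \<forall>x. norm x \<ge> \<rho>1 \<longrightarrow>
            norm (u \<epsilon> x) / \<epsilon> \<le> C \<and> onorm (frechet_derivative (u \<epsilon>) (at x)) \<le> C)"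
proof (intro allI impI)
  fix \<rho>1 assume r1: "\<rho>1 > \<rho>"
  obtain M0 where M0: "\<forall>\<epsilon>\<in>{0<..<\<epsilon>0}. \<forall>x. norm (u \<epsilon> x) \<le> M0" using u_bounded by blast
  define M where "M = max M0 0"
  have Mn: "M \<ge> 0" and Mb: "\<And>\<epsilon> x. \<epsilon> \<in> {0<..<\<epsilon>0} \<Longrightarrow> norm (u \<epsilon> x) \<le> M"
    using M0 by (auto simp: M_def intro: le_max_iff_disj[THEN iffD2])
  obtain A0 where A0: "\<forall>\<epsilon>\<in>{0<..<\<epsilon>0}. a \<epsilon> \<le> A0" using a_bounded by blast
  define A where "A = max A0 0"
  have An: "A \<ge> 0" and Ab: "\<And>\<epsilon>. \<epsilon> \<in> {0<..<\<epsilon>0} \<Longrightarrow> a \<epsilon> \<le> A"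
    using A0 by (auto simp: A_def intro: le_max_iff_disj[THEN iffD2])
  obtain F0 where F0: "\<And>x. norm (f x) \<le> F0" using f_Linf unfolding bounded_iff by blast
  define F where "F = max F0 0"
  have Fn: "F \<ge> 0" and Fb: "\<And>x. norm (f x) \<le> F" using F0 by (auto simp: F_def intro: le_max_iff_disj[THEN iffD2])
  obtain Mm0 where Mm0: "\<And>x. norm (\<mu> x) \<le> Mm0" using mu_bounded unfolding bounded_iff by blast
  define Mm where "Mm = max Mm0 0"
  have Mmn: "Mm \<ge> 0" and Mmb: "\<And>x. \<bar>\<mu> x\<bar> \<le> Mm" using Mm0 by (auto simp: Mm_def intro: le_max_iff_disj[THEN iffD2])
  obtain Du D2u where DD: "\<And>\<epsilon>. \<epsilon> \<in> {0<..<\<epsilon>0} \<Longrightarrow> (\<forall>x. (u \<epsilon> has_derivative blinfun_apply (Du \<epsilon> x)) (at x)) \<and>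
      (\<forall>x. (Du \<epsilon> has_derivative blinfun_apply (D2u \<epsilon> x)) (at x))"
    using u_C2 unfolding C2_plane_def by metis
  define \<rho>a where "\<rho>a = \<rho> + (\<rho>1 - \<rho>) / 4"
  define \<rho>b where "\<rho>b = \<rho> + (\<rho>1 - \<rho>) / 2"
  define r where "r = (\<rho>1 - \<rho>) / 8"
  have rp: "r > 0" using r1 by (simp add: r_def)
  define m where "m = - \<mu>rad \<rho>a"
  have mp: "m > 0" using mu_mono[OF mu_smooth mu_decr, of \<rho> \<rho>a] rho_pos r1 rho_zero
    by (simp add: m_def \<rho>a_def)
  have mu_neg: "\<mu> y \<le> - m" if "norm y \<ge> \<rho>a" for y
  proof (cases "norm y = \<rho>a")
    case True thus ?thesis by (simp add: mu_def m_def)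
  next
    case False
    hence "\<mu>rad (norm y) < \<mu>rad \<rho>a" using mu_mono[OF mu_smooth mu_decr, of \<rho>a "norm y"] that rho_pos r1
      by (simp add: \<rho>a_def)
    thus ?thesis by (simp add: mu_def m_def)
  qed
  have pde: "\<epsilon>\<^sup>2 * (blinfun_apply (blinfun_apply (D2u \<epsilon> y) (axis 1 1)) (axis 1 1) $ j
      + blinfun_apply (blinfun_apply (D2u \<epsilon> y) (axis 2 1)) (axis 2 1) $ j)
     = (- \<mu> y + (norm (u \<epsilon> y))\<^sup>2) * u \<epsilon> y $ j - \<epsilon> * a \<epsilon> * f y $ j"
    if e: "\<epsilon> \<in> {0<..<\<epsilon>0}" for \<epsilon> y j
  proof -
    have "laplacian (u \<epsilon>) y = (\<Sum>i\<in>UNIV. blinfun_apply (blinfun_apply (D2u \<epsilon> y) (axis i 1)) (axis i 1))"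
      using DD[OF e] by (intro lap_formula) auto
    hence lj: "laplacian (u \<epsilon>) y $ j = blinfun_apply (blinfun_apply (D2u \<epsilon> y) (axis 1 1)) (axis 1 1) $ j
      + blinfun_apply (blinfun_apply (D2u \<epsilon> y) (axis 2 1)) (axis 2 1) $ j"
      by (simp add: sum_2)
    have "(\<epsilon>\<^sup>2 *\<^sub>R laplacian (u \<epsilon>) y + \<mu> y *\<^sub>R u \<epsilon> y - (norm (u \<epsilon> y))\<^sup>2 *\<^sub>R u \<epsilon> y
         + (\<epsilon> * a \<epsilon>) *\<^sub>R f y) $ j = 0" using u_eq[OF e] by simp
    thus ?thesis unfolding lj[symmetric] by (simp add: algebra_simps)
  qed
  define K1 where "K1 = A * F / m + 4 * M / (sqrt m * r)"
  have K1n: "K1 \<ge> 0" unfolding K1_def using An Fn mp Mn rp by simp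
  have part1: "\<bar>u \<epsilon> x0 $ j\<bar> \<le> \<epsilon> * K1" if e: "\<epsilon> \<in> {0<..<\<epsilon>0}" and x0: "norm x0 \<ge> \<rho>b" for \<epsilon> x0 j
  proof -
    have ep: "\<epsilon> > 0" using e by simp
    have one: "s * u \<epsilon> x0 $ j \<le> \<epsilon> * K1" if s: "\<bar>s\<bar> = 1" for s
    proof -
      note sf = scal_facts[of "u \<epsilon>" "Du \<epsilon>" "D2u \<epsilon>", OF conjunct1[OF DD[OF e], rule_format] conjunct2[OF DD[OF e], rule_format]]
      have "s * u \<epsilon> x0 $ j \<le> \<epsilon> * A * F / m + 4 * M / exp (sqrt m / \<epsilon> * r)"
      proof (rule small_est[where w = "\<lambda>y. s * u \<epsilon> y $ j" and xc = x0 and E = "\<epsilon> * A * F" and M = M and m = m and r = r and Wa = "\<lambda>p v. s * (blinfun_apply (Du \<epsilon> p) v $ j)"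
            and Wb = "\<lambda>p v. s * (blinfun_apply (blinfun_apply (D2u \<epsilon> p) v) v $ j)"])
        show "\<And>p v t. ((\<lambda>t. s * u \<epsilon> (p + t *\<^sub>R v) $ j) has_real_derivative s * (blinfun_apply (Du \<epsilon> (p + t *\<^sub>R v)) v $ j)) (at t)"
          by (rule sf(1))
        show "\<And>p v t. ((\<lambda>t. s * (blinfun_apply (Du \<epsilon> (p + t *\<^sub>R v)) v $ j)) has_real_derivative
          s * (blinfun_apply (blinfun_apply (D2u \<epsilon> (p + t *\<^sub>R v)) v) v $ j)) (at t)"
          by (rule sf(2))
        show "continuous_on UNIV (\<lambda>y. s * u \<epsilon> y $ j)" by (rule sf(3))
        show "\<epsilon> > 0" "m > 0" "r > 0" "\<epsilon> * A * F \<ge> 0" "M \<ge> 0" using ep mp rp An Fn Mn by auto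
        fix y assume yb: "\<forall>k. \<bar>y$k - x0$k\<bar> \<le> r"
        have ny: "norm y \<ge> \<rho>a" using box_norm[OF yb] x0 unfolding \<rho>a_def \<rho>b_def r_def by linarith
        have "\<bar>s * u \<epsilon> y $ j\<bar> \<le> M" using s component_le_norm_cart[of "u \<epsilon> y" j] Mb[OF e, of y]
          by (simp add: abs_mult)
        moreover have "\<exists>c\<ge>m. \<epsilon>\<^sup>2 * (s * (blinfun_apply (blinfun_apply (D2u \<epsilon> y) (axis 1 1)) (axis 1 1) $ j)
            + s * (blinfun_apply (blinfun_apply (D2u \<epsilon> y) (axis 2 1)) (axis 2 1) $ j))
            \<ge> c * (s * u \<epsilon> y $ j) - \<epsilon> * A * F"
        proof (intro exI conjI)
          show "- \<mu> y + (norm (u \<epsilon> y))\<^sup>2 \<ge> m" using mu_neg[OF ny] zero_le_power2[of "norm (u \<epsilon> y)"] by linarith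
          have "\<bar>s * f y $ j\<bar> \<le> F" using s component_le_norm_cart[of "f y" j] Fb[of y]
            by (simp add: abs_mult)
          hence sf1: "s * f y $ j \<le> F" by (simp add: abs_le_iff)
          have ea: "0 \<le> \<epsilon> * a \<epsilon>" using ep a_nonneg[OF e] by simp
          have "\<epsilon> * a \<epsilon> * (s * f y $ j) \<le> \<epsilon> * a \<epsilon> * F" using mult_left_mono[OF sf1 ea] .
          also have "\<dots> \<le> \<epsilon> * A * F" using ep Ab[OF e] Fn by (intro mult_right_mono mult_left_mono) auto
          finally have "\<epsilon> * a \<epsilon> * (s * f y $ j) \<le> \<epsilon> * A * F" .
          thus "\<epsilon>\<^sup>2 * (s * (blinfun_apply (blinfun_apply (D2u \<epsilon> y) (axis 1 1)) (axis 1 1) $ j)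
            + s * (blinfun_apply (blinfun_apply (D2u \<epsilon> y) (axis 2 1)) (axis 2 1) $ j))
            \<ge> (- \<mu> y + (norm (u \<epsilon> y))\<^sup>2) * (s * u \<epsilon> y $ j) - \<epsilon> * A * F"
          proof -
            let ?L1 = "blinfun_apply (blinfun_apply (D2u \<epsilon> y) (axis 1 1)) (axis 1 1) $ j"
            let ?L2 = "blinfun_apply (blinfun_apply (D2u \<epsilon> y) (axis 2 1)) (axis 2 1) $ j"
            let ?c = "- \<mu> y + (norm (u \<epsilon> y))\<^sup>2"
            have "\<epsilon>\<^sup>2 * (s * ?L1 + s * ?L2) = s * (\<epsilon>\<^sup>2 * (?L1 + ?L2))" by (simp add: algebra_simps)
            also have "\<dots> = s * (?c * u \<epsilon> y $ j - \<epsilon> * a \<epsilon> * f y $ j)" using pde[OF e, of y j] by simp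
            also have "\<dots> = ?c * (s * u \<epsilon> y $ j) - \<epsilon> * a \<epsilon> * (s * f y $ j)" by (simp add: algebra_simps)
            finally show ?thesis using \<open>\<epsilon> * a \<epsilon> * (s * f y $ j) \<le> \<epsilon> * A * F\<close> by linarith
          qed
        qed
        ultimately show "\<bar>s * u \<epsilon> y $ j\<bar> \<le> M \<and> (\<exists>c\<ge>m. \<epsilon>\<^sup>2 * (s * (blinfun_apply (blinfun_apply (D2u \<epsilon> y) (axis 1 1)) (axis 1 1) $ j)
            + s * (blinfun_apply (blinfun_apply (D2u \<epsilon> y) (axis 2 1)) (axis 2 1) $ j))
            \<ge> c * (s * u \<epsilon> y $ j) - \<epsilon> * A * F)" by blast
      qed
      also have "4 * M / exp (sqrt m / \<epsilon> * r) \<le> \<epsilon> * (4 * M / (sqrt m * r))"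
      proof -
        have pos: "sqrt m / \<epsilon> * r > 0" using mp ep rp by simp
        have "exp (sqrt m / \<epsilon> * r) \<ge> sqrt m / \<epsilon> * r" using exp_ge_add_one_self[of "sqrt m / \<epsilon> * r"] by linarith
        moreover have "0 < exp (sqrt m / \<epsilon> * r) * (sqrt m / \<epsilon> * r)"
          using mult_pos_pos[OF exp_gt_zero pos] .
        moreover have "0 \<le> 4 * M" using Mn by simp
        ultimately have "4 * M / exp (sqrt m / \<epsilon> * r) \<le> 4 * M / (sqrt m / \<epsilon> * r)"
          by (intro divide_left_mono)
        also have "\<dots> = \<epsilon> * (4 * M / (sqrt m * r))" using ep by (simp add: field_simps)
        finally show ?thesis .
      qed
      finally show ?thesis unfolding K1_def using mp by (simp add: algebra_simps)
    qed
    show ?thesis using one[of 1] one[of "-1"] by (simp add: abs_le_iff)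
  qed
  define K2 where "K2 = Mm * K1 + M * M * K1 + A * F + 1"
  have "Mm * K1 \<ge> 0" "M * M * K1 \<ge> 0" "A * F \<ge> 0" using Mmn K1n Mn An Fn by simp_all
  hence K2p: "K2 > 0" unfolding K2_def by linarith
  define K3 where "K3 = 2 * K1 + K2"
  have lapb: "\<bar>blinfun_apply (blinfun_apply (D2u \<epsilon> y) (axis 1 1)) (axis 1 1) $ j
      + blinfun_apply (blinfun_apply (D2u \<epsilon> y) (axis 2 1)) (axis 2 1) $ j\<bar> \<le> K2 / \<epsilon>"
    if e: "\<epsilon> \<in> {0<..<\<epsilon>0}" and y: "norm y \<ge> \<rho>b" for \<epsilon> y j
  proof -
    let ?L = "blinfun_apply (blinfun_apply (D2u \<epsilon> y) (axis 1 1)) (axis 1 1) $ j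
      + blinfun_apply (blinfun_apply (D2u \<epsilon> y) (axis 2 1)) (axis 2 1) $ j"
    let ?c = "- \<mu> y + (norm (u \<epsilon> y))\<^sup>2"
    have ep: "\<epsilon> > 0" using e by simp
    have U: "\<bar>u \<epsilon> y $ j\<bar> \<le> \<epsilon> * K1" using part1[OF e y] .
    have nu: "norm (u \<epsilon> y) \<le> M" using Mb[OF e] .
    have "(norm (u \<epsilon> y))\<^sup>2 \<le> M * M" using nu Mn by (simp add: power2_eq_square) (rule mult_mono, auto)
    hence cb: "\<bar>?c\<bar> \<le> Mm + M * M" using Mmb[of y] zero_le_power2[of "norm (u \<epsilon> y)"] unfolding abs_le_iff by linarith
    have t1: "\<bar>?c * u \<epsilon> y $ j\<bar> \<le> (Mm + M * M) * (\<epsilon> * K1)"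
      unfolding abs_mult using cb U by (intro mult_mono) auto
    have fj: "\<bar>f y $ j\<bar> \<le> F" using component_le_norm_cart[of "f y" j] Fb[of y] by linarith
    have "\<bar>\<epsilon> * a \<epsilon> * f y $ j\<bar> = \<epsilon> * a \<epsilon> * \<bar>f y $ j\<bar>" using ep a_nonneg[OF e] by (simp add: abs_mult)
    also have "\<dots> \<le> \<epsilon> * A * F" using ep a_nonneg[OF e] Ab[OF e] fj An
      by (intro mult_mono) auto
    finally have t2: "\<bar>\<epsilon> * a \<epsilon> * f y $ j\<bar> \<le> \<epsilon> * A * F" .
    have "\<epsilon>\<^sup>2 * \<bar>?L\<bar> = \<bar>\<epsilon>\<^sup>2 * ?L\<bar>" by (simp add: abs_mult)
    also have "\<dots> = \<bar>?c * u \<epsilon> y $ j - \<epsilon> * a \<epsilon> * f y $ j\<bar>"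
      by (simp only: pde[OF e])
    also have "\<dots> \<le> (Mm + M * M) * (\<epsilon> * K1) + \<epsilon> * A * F" using t1 t2 by linarith
    also have "\<dots> \<le> \<epsilon> * K2" unfolding K2_def using ep by (simp add: algebra_simps)
    finally have "\<epsilon> * (\<epsilon> * \<bar>?L\<bar>) \<le> \<epsilon> * K2" by (simp add: power2_eq_square mult.assoc)
    hence "\<epsilon> * \<bar>?L\<bar> \<le> K2" using ep by simp
    thus ?thesis using ep by (simp add: pos_le_divide_eq mult.commute)
  qed
  define \<epsilon>1 where "\<epsilon>1 = min \<epsilon>0 ((\<rho>1 - \<rho>b) / 2)"
  have e1p: "\<epsilon>1 > 0" using eps0_pos r1 unfolding \<epsilon>1_def \<rho>b_def by (simp add: field_simps)
  show "\<exists>\<epsilon>1>0. \<epsilon>1 \<le> \<epsilon>0 \<and> (\<exists>C. \<forall>\<epsilon>\<in>{0<..<\<epsilon>1}. \<forall>x. \<rho>1 \<le> norm x \<longrightarrow>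
            norm (u \<epsilon> x) / \<epsilon> \<le> C \<and> onorm (frechet_derivative (u \<epsilon>) (at x)) \<le> C)"
  proof (intro exI conjI ballI allI impI)
    show "\<epsilon>1 > 0" by (rule e1p)
    show "\<epsilon>1 \<le> \<epsilon>0" by (simp add: \<epsilon>1_def)
    fix \<epsilon> :: real and x :: "real^2" assume e1: "\<epsilon> \<in> {0<..<\<epsilon>1}" and x: "\<rho>1 \<le> norm x"
    have e: "\<epsilon> \<in> {0<..<\<epsilon>0}" using e1 by (simp add: \<epsilon>1_def)
    have ep: "\<epsilon> > 0" using e by simp
    have xb: "norm x \<ge> \<rho>b" using x r1 unfolding \<rho>b_def by (simp add: field_simps)
    have "norm (u \<epsilon> x) \<le> (\<Sum>j\<in>UNIV. \<bar>u \<epsilon> x $ j\<bar>)" by (rule norm_le_l1_cart)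
    also have "\<dots> \<le> 2 * (\<epsilon> * K1)" using part1[OF e xb, of 1] part1[OF e xb, of 2] by (simp add: sum_2)
    finally have "norm (u \<epsilon> x) / \<epsilon> \<le> 2 * K1" using ep by (simp add: divide_le_eq mult.commute mult.left_commute)
    thus "norm (u \<epsilon> x) / \<epsilon> \<le> max (2 * K1) (4 * K3)" by simp
    have fd: "frechet_derivative (u \<epsilon>) (at x) = blinfun_apply (Du \<epsilon> x)"
      using frechet_derivative_at[OF conjunct1[OF DD[OF e], rule_format, of x]] by simp
    have gb: "\<bar>blinfun_apply (Du \<epsilon> x) (axis i 1) $ j\<bar> \<le> K3" for i j
    proof -
      obtain l :: 2 where il: "i \<noteq> l" by (metis exhaust_2 num1_eq1 one_neq_zero zero_neq_one)
      have kil: "k = i \<or> k = l" for k :: 2 by (metis exhaust_2 il)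
      have one: "s * (blinfun_apply (Du \<epsilon> x) (axis i 1) $ j) \<le> K3" if s: "\<bar>s\<bar> = 1" for s
      proof -
        note sf = scal_facts[of "u \<epsilon>" "Du \<epsilon>" "D2u \<epsilon>", OF conjunct1[OF DD[OF e], rule_format] conjunct2[OF DD[OF e], rule_format]]
        have "s * (blinfun_apply (Du \<epsilon> x) (axis i 1) $ j) \<le> 2 * (\<epsilon> * K1) / \<epsilon> + K2 / \<epsilon> * \<epsilon>"
        proof (rule grad_est[where w = "\<lambda>y. s * u \<epsilon> y $ j" and xc = x and i = i and l = l and d = \<epsilon>
            and Ad = "\<epsilon> * K1" and Bd = "K2 / \<epsilon>"
            and Wa = "\<lambda>p v. s * (blinfun_apply (Du \<epsilon> p) v $ j)"
            and Wb = "\<lambda>p v. s * (blinfun_apply (blinfun_apply (D2u \<epsilon> p) v) v $ j)"])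
          show "\<And>p v t. ((\<lambda>t. s * u \<epsilon> (p + t *\<^sub>R v) $ j) has_real_derivative s * (blinfun_apply (Du \<epsilon> (p + t *\<^sub>R v)) v $ j)) (at t)"
            by (rule sf(1))
          show "\<And>p v t. ((\<lambda>t. s * (blinfun_apply (Du \<epsilon> (p + t *\<^sub>R v)) v $ j)) has_real_derivative
            s * (blinfun_apply (blinfun_apply (D2u \<epsilon> (p + t *\<^sub>R v)) v) v $ j)) (at t)"
            by (rule sf(2))
          show "continuous_on UNIV (\<lambda>y. s * u \<epsilon> y $ j)" by (rule sf(3))
          show "\<And>p v. s * (blinfun_apply (Du \<epsilon> p) (- v) $ j) = - (s * (blinfun_apply (Du \<epsilon> p) v $ j))"
            by (rule sf(4))
          show "\<And>p v. s * (blinfun_apply (blinfun_apply (D2u \<epsilon> p) (- v)) (- v) $ j) = s * (blinfun_apply (blinfun_apply (D2u \<epsilon> p) v) v $ j)"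
            by (rule sf(5))
          show "i \<noteq> l" by (rule il)
          show "\<epsilon> > 0" "K2 / \<epsilon> > 0" "\<epsilon> * K1 \<ge> 0" using ep K2p K1n by auto
          fix y assume yb: "\<forall>k. \<bar>y$k - x$k\<bar> \<le> \<epsilon>"
          have "2 * \<epsilon> \<le> \<rho>1 - \<rho>b" using e1 by (simp add: \<epsilon>1_def field_simps)
          hence ny: "norm y \<ge> \<rho>b" using box_norm[OF yb] x by linarith
          have "\<bar>s * u \<epsilon> y $ j\<bar> \<le> \<epsilon> * K1" using part1[OF e ny] s by (simp add: abs_mult)
          moreover have "\<bar>s * (blinfun_apply (blinfun_apply (D2u \<epsilon> y) (axis i 1)) (axis i 1) $ j)
              + s * (blinfun_apply (blinfun_apply (D2u \<epsilon> y) (axis l 1)) (axis l 1) $ j)\<bar> \<le> K2 / \<epsilon>"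
          proof -
            have "s * (blinfun_apply (blinfun_apply (D2u \<epsilon> y) (axis i 1)) (axis i 1) $ j)
              + s * (blinfun_apply (blinfun_apply (D2u \<epsilon> y) (axis l 1)) (axis l 1) $ j)
              = s * (blinfun_apply (blinfun_apply (D2u \<epsilon> y) (axis 1 1)) (axis 1 1) $ j
              + blinfun_apply (blinfun_apply (D2u \<epsilon> y) (axis 2 1)) (axis 2 1) $ j)"
              using il exhaust_2[of i] exhaust_2[of l] by (auto simp: algebra_simps)
            thus ?thesis using lapb[OF e ny, of j] s by (simp add: abs_mult)
          qed
          ultimately show "\<bar>s * u \<epsilon> y $ j\<bar> \<le> \<epsilon> * K1 \<and> \<bar>s * (blinfun_apply (blinfun_apply (D2u \<epsilon> y) (axis i 1)) (axis i 1) $ j)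
              + s * (blinfun_apply (blinfun_apply (D2u \<epsilon> y) (axis l 1)) (axis l 1) $ j)\<bar> \<le> K2 / \<epsilon>" by blast
        qed
        also have "2 * (\<epsilon> * K1) / \<epsilon> + K2 / \<epsilon> * \<epsilon> = K3" using ep by (simp add: K3_def)
        finally show ?thesis .
      qed
      show ?thesis using one[of 1] one[of "-1"] by (simp add: abs_le_iff)
    qed
    have "onorm (frechet_derivative (u \<epsilon>) (at x)) \<le> 4 * K3" unfolding fd by (rule onorm_bd) (rule gb)
    thus "onorm (frechet_derivative (u \<epsilon>) (at x)) \<le> max (2 * K1) (4 * K3)" by simp
  qed
qed

end
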